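(* The winding fraction satisfies: (a) $\mathrm{wf}(\overrightarrow G)>0$ if and only if $\overrightarrow G$ has a directed cycle. (b) If there is a cyclic homomorphism $\overrightarrow G\to\overrightarrow H$ then $\mathrm{wf}(\overrightarrow G)\le\mathrm{wf}(\overrightarrow H)$. (c) If $X\subseteq S^1$ is finite and $0<r<\frac12$ then $\mathrm{wf}_{\le}(X;r)\le r$, $\mathrm{wf}_{<}(X;r)<r$, and $\mathrm{wf}_{<}(X;r)\le\mathrm{wf}_{\le}(X;r)$. (d) $\mathrm{wf}(\overrightarrow{C_n^k})=\frac kn$ for all integers $0\le k<\frac n2$.
   Context: A directed graph is a finite pair $(V,E)$, $E\subseteq V\times V$, with no loops and never both $(v,w),(w,v)\in E$; write $v\to w$. A directed cycle is a sequence $v_1,\dots,v_s$ with $v_i\to v_{i+1}$ (indices mod $s$). A cyclic graph is a directed graph with a cyclic vertex order $v_0\prec\cdots\prec v_{n-1}$ (indices mod $n$) such that $v_i\to v_j$ implies $j=i+1$ or both $v_i\to v_{j-1}$ and $v_{i+1}\to v_j$. For three elements of a cyclic order $x_0\prec\cdots\prec x_{n-1}$, $x_i\prec x_j\prec x_k$ means $i<j<k$ or $k<i<j$ or $j<k<i$; subintervals are $\emptyset$, $\{x_i,\dots,x_j\}$ ($i\le j$) and $\{x_j,\dots,x_{n-1},x_0,\dots,x_i\}$ ($i<j$). A map $f$ is cyclic monotone if its fibres are subintervals and $f(s)\prec f(s')\prec f(s'')$ implies $s\prec s'\prec s''$. A cyclic homomorphism of cyclic graphs is a cyclic monotone vertex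 map $f$ such that each edge $v\to w$ has $f(v)=f(w)$ or $f(v)\to f(w)$, and $f$ is non-constant if the source has a directed cycle. $\overrightarrow{C_n^k}$ ($0\le k<n/2$): vertices $\{0,\dots,n-1\}$, $i\to j$ iff $0<(j-i)\bmod n\le k$. $\mathrm{wf}(\overrightarrow G)=\sup\{k/n:\exists\text{ cyclic homomorphism }\overrightarrow{C_n^k}\to\overrightarrow G\}$. $S^1$ is the circle of circumference $1$ with points in $[0,1)$ and clockwise distance $\vec d(x,y)$; for finite $X\subseteq S^1$ and $0<r<\frac12$, $\overrightarrow{\mathbf{VR}}_{\le}(X;r)$ (resp. $\overrightarrow{\mathbf{VR}}_{<}(X;r)$) is the directed graph on $X$ with $x_1\to x_2$ iff $0<\vec d(x_1,x_2)\le r$ (resp. $<r$), cyclic with respect to the clockwise order; $\mathrm{wf}_{\le}(X;r)$ and $\mathrm{wf}_{<}(X;r)$ are their winding fractions. *)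

theory Defs
  imports Complex_Main
begin

text \<open>A finite directed graph with a cyclic vertex order is represented by its number
  of vertices n; the vertices are 0,...,n-1, listed in their cyclic order
  v_0 < v_1 < ... < v_(n-1) (indices mod n).  E i j means v_i \<rightarrow> v_j.\<close>

definition directed_graph :: "nat \<Rightarrow> (nat \<Rightarrow> nat \<Rightarrow> bool) \<Rightarrow> bool" where
  "directed_graph n E \<longleftrightarrow>
     (\<forall>i j. E i j \<longrightarrow> i < n \<and> j < n) \<and> (\<forall>i. \<not> E i i) \<and> (\<forall>i j. E i j \<longrightarrow> \<not> E j i)"

definition cyclic_graph :: "nat \<Rightarrow> (nat \<Rightarrow> nat \<Rightarrow> bool) \<Rightarrow> bool" where
  "cyclic_graph n E \<longleftrightarrow> directed_graph n E \<and>
     (\<forall>i j. E i j \<longrightarrow> j = (i + 1) mod n \<or>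
                        (E i ((j + n - 1) mod n) \<and> E ((i + 1) mod n) j))"

definition has_dcycle :: "nat \<Rightarrow> (nat \<Rightarrow> nat \<Rightarrow> bool) \<Rightarrow> bool" where
  "has_dcycle n E \<longleftrightarrow>
     (\<exists>s::nat. \<exists>v::nat \<Rightarrow> nat. s > 0 \<and> (\<forall>i<s. v i < n \<and> E (v i) (v ((i + 1) mod s))))"

definition cbetw :: "nat \<Rightarrow> nat \<Rightarrow> nat \<Rightarrow> bool" where
  "cbetw i j k \<longleftrightarrow> (i < j \<and> j < k) \<or> (k < i \<and> i < j) \<or> (j < k \<and> k < i)"

definition subinterval :: "nat \<Rightarrow> nat set \<Rightarrow> bool" where
  "subinterval n A \<longleftrightarrow> A = {} \<or>
     (\<exists>i j. i \<le> j \<and> j < n \<and> A = {i..j}) \<or>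
     (\<exists>i j. i < j \<and> j < n \<and> A = {j..<n} \<union> {0..i})"

definition cyclic_monotone :: "nat \<Rightarrow> nat \<Rightarrow> (nat \<Rightarrow> nat) \<Rightarrow> bool" where
  "cyclic_monotone n m f \<longleftrightarrow>
     (\<forall>y<m. subinterval n {x. x < n \<and> f x = y}) \<and>
     (\<forall>s<n. \<forall>s'<n. \<forall>s''<n. cbetw (f s) (f s') (f s'') \<longrightarrow> cbetw s s' s'')"

definition cyclic_hom :: "nat \<Rightarrow> (nat \<Rightarrow> nat \<Rightarrow> bool) \<Rightarrow> nat \<Rightarrow> (nat \<Rightarrow> nat \<Rightarrow> bool)
                          \<Rightarrow> (nat \<Rightarrow> nat) \<Rightarrow> bool" where
  "cyclic_hom n E m F f \<longleftrightarrow>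
     (\<forall>x<n. f x < m) \<and> cyclic_monotone n m f \<and>
     (\<forall>v w. E v w \<longrightarrow> f v = f w \<or> F (f v) (f w)) \<and>
     (has_dcycle n E \<longrightarrow> (\<exists>a<n. \<exists>b<n. f a \<noteq> f b))"

definition Cnk :: "nat \<Rightarrow> nat \<Rightarrow> nat \<Rightarrow> nat \<Rightarrow> bool" where
  "Cnk n k i j \<longleftrightarrow> i < n \<and> j < n \<and>
     0 < (int j - int i) mod int n \<and> (int j - int i) mod int n \<le> int k"

text \<open>Winding fraction; the 0 added to the set only matters for the empty graph
  (where the supremum would be over the empty set).\<close>
definition wf :: "nat \<Rightarrow> (nat \<Rightarrow> nat \<Rightarrow> bool) \<Rightarrow> real" where
  "wf m F = Sup ({real k / real n | n k. 2 * k < n \<and> (\<exists>f. cyclic_hom n (Cnk n k) m F f)} \<union> {0})"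

text \<open>Circle S^1 = [0,1); clockwise distance from x to y is (y - x) mod 1.\<close>
definition cw_dist :: "real \<Rightarrow> real \<Rightarrow> real" where
  "cw_dist x y = frac (y - x)"

text \<open>Vietoris-Rips graphs on a finite X \<subseteq> [0,1); vertex i is the i-th element of X
  in increasing (= clockwise) order.\<close>
definition VR_le :: "real set \<Rightarrow> real \<Rightarrow> nat \<Rightarrow> nat \<Rightarrow> bool" where
  "VR_le X r i j \<longleftrightarrow> i < card X \<and> j < card X \<and>
     0 < cw_dist (sorted_list_of_set X ! i) (sorted_list_of_set X ! j) \<and>
     cw_dist (sorted_list_of_set X ! i) (sorted_list_of_set X ! j) \<le> r"

definition VR_lt :: "real set \<Rightarrow> real \<Rightarrow> nat \<Rightarrow> nat \<Rightarrow> bool" where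
  "VR_lt X r i j \<longleftrightarrow> i < card X \<and> j < card X \<and>
     0 < cw_dist (sorted_list_of_set X ! i) (sorted_list_of_set X ! j) \<and>
     cw_dist (sorted_list_of_set X ! i) (sorted_list_of_set X ! j) < r"

definition wf_le :: "real set \<Rightarrow> real \<Rightarrow> real" where
  "wf_le X r = wf (card X) (VR_le X r)"

definition wf_lt :: "real set \<Rightarrow> real \<Rightarrow> real" where
  "wf_lt X r = wf (card X) (VR_lt X r)"

end

theory Submission
  imports Defs
begin


definition cd :: "nat \<Rightarrow> nat \<Rightarrow> nat \<Rightarrow> nat" where
  "cd n a b = (if a \<le> b then b - a else b + n - a)"

definition sucm :: "nat \<Rightarrow> nat \<Rightarrow> nat" where
  "sucm n a = (if a + 1 = n then 0 else a + 1)"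

definition prem :: "nat \<Rightarrow> nat \<Rightarrow> nat" where
  "prem n b = (if b = 0 then n - 1 else b - 1)"

lemma cd_mod: assumes "a < n" "b < n" shows "(int b - int a) mod int n = int (cd n a b)"
proof (cases "a \<le> b")
  case True then show ?thesis using assms by (simp add: cd_def of_nat_diff)
next
  case False
  have "(int b - int a) mod int n = (int b - int a + int n) mod int n" by simp
  also have "\<dots> = int b - int a + int n" using assms False by (intro mod_pos_pos_trivial) auto
  finally show ?thesis using assms False by (simp add: cd_def of_nat_diff)
qed

lemma sucm_mod: "a < n \<Longrightarrow> (a + 1) mod n = sucm n a"
  by (auto simp: sucm_def)

lemma prem_mod: "b < n \<Longrightarrow> (b + n - 1) mod n = prem n b"
proof -
  assume "b < n"
  then show ?thesis
  proof (cases "b = 0")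
    case True then show ?thesis using \<open>b<n\<close> by (simp add: prem_def)
  next
    case False
    then have "b + n - 1 = (b - 1) + n" by simp
    then have "(b + n - 1) mod n = (b - 1) mod n" by simp
    then show ?thesis using False \<open>b<n\<close> by (simp add: prem_def)
  qed
qed

lemma cg_edge: "cyclic_graph n E \<Longrightarrow> E a b \<Longrightarrow> a < n \<and> b < n \<and> a \<noteq> b \<and> \<not> E b a"
  unfolding cyclic_graph_def directed_graph_def by metis

lemma cg_step: assumes "cyclic_graph n E" "E a b"
  shows "b = sucm n a \<or> (E a (prem n b) \<and> E (sucm n a) b)"
proof -
  have ab: "a < n" "b < n" using cg_edge[OF assms] by auto
  then show ?thesis using assms unfolding cyclic_graph_def
    using sucm_mod[OF ab(1)] prem_mod[OF ab(2)] by metis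
qed

lemma arc_aux: "\<forall>a b w. cyclic_graph n E \<longrightarrow> E a b \<longrightarrow> w < n \<longrightarrow> 0 < cd n a w \<longrightarrow>
   cd n a w < cd n a b \<longrightarrow> cd n a b = L \<longrightarrow> E a w \<and> E w b"
proof (induction L rule: less_induct)
  case (less L)
  show ?case
  proof (intro allI impI)
    fix a b w
    assume cg: "cyclic_graph n E" and e: "E a b" and w: "w < n" and h0: "0 < cd n a w"
      and hL: "cd n a w < cd n a b" and L: "cd n a b = L"
    have ab: "a < n" "b < n" "a \<noteq> b" using cg_edge[OF cg e] by auto
    have "b \<noteq> sucm n a" using ab w h0 hL unfolding cd_def sucm_def by (auto split: if_splits)
    then have e1: "E a (prem n b)" and e2: "E (sucm n a) b" using cg_step[OF cg e] by auto
    have L1: "cd n a (prem n b) = L - 1" using ab w h0 hL L unfolding cd_def prem_def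
      by (auto split: if_splits)
    have L2: "cd n (sucm n a) b = L - 1" using ab w h0 hL L unfolding cd_def sucm_def
      by (auto split: if_splits)
    have "E a w"
    proof (cases "cd n a w = L - 1")
      case True
      then have "w = prem n b" using ab w h0 hL L unfolding cd_def prem_def
        by (auto split: if_splits)
      then show ?thesis using e1 by simp
    next
      case False
      then have "cd n a w < cd n a (prem n b)" using L1 hL L by simp
      moreover have "L - 1 < L" using h0 hL L by simp
      ultimately show ?thesis using less.IH[of "L - 1"] cg e1 w h0 L1 by blast
    qed
    moreover have "E w b"
    proof (cases "cd n a w = 1")
      case True
      then have "w = sucm n a" using ab w h0 hL L unfolding cd_def sucm_def
        by (auto split: if_splits)
      then show ?thesis using e2 by simp
    next
      case False
      have c: "cd n (sucm n a) w = cd n a w - 1" using ab w h0 hL L unfolding cd_def sucm_def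
        by (auto split: if_splits)
      have "0 < cd n (sucm n a) w" "cd n (sucm n a) w < cd n (sucm n a) b"
        using c False h0 hL L L2 by auto
      moreover have "L - 1 < L" using h0 hL L by simp
      ultimately show ?thesis using less.IH[of "L - 1"] cg e2 w L2 by blast
    qed
    ultimately show "E a w \<and> E w b" by simp
  qed
qed

lemma arc: "cyclic_graph n E \<Longrightarrow> E a b \<Longrightarrow> w < n \<Longrightarrow> 0 < cd n a w \<Longrightarrow>
   cd n a w < cd n a b \<Longrightarrow> E a w \<and> E w b"
  using arc_aux by blast



lemma cd_lt: "a < n \<Longrightarrow> b < n \<Longrightarrow> cd n a b < n"
  by (auto simp: cd_def)

lemma cd_0: "a < n \<Longrightarrow> b < n \<Longrightarrow> cd n a b = 0 \<longleftrightarrow> a = b"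
  by (auto simp: cd_def)

lemma cd_step: "a < n \<Longrightarrow> b < n \<Longrightarrow> w < n \<Longrightarrow> cd n a b \<le> cd n a w \<Longrightarrow>
   cd n b w = cd n a w - cd n a b"
  unfolding cd_def by (cases "a \<le> b"; cases "a \<le> w"; cases "b \<le> w") simp_all

lemma walk_cover:
  fixes x :: "nat \<Rightarrow> nat"
  assumes xl: "\<forall>t\<le>N. x t < n" and cl: "x N = x 0" and nc: "\<exists>t<N. x t \<noteq> x (Suc t)"
    and w: "w < n"
  shows "\<exists>t<N. cd n (x t) w < cd n (x t) (x (Suc t))"
proof (rule ccontr)
  assume "\<not> ?thesis"
  then have le: "\<forall>t<N. cd n (x t) (x (Suc t)) \<le> cd n (x t) w" by auto
  have inv: "t \<le> N \<Longrightarrow> cd n (x t) w + (\<Sum>u<t. cd n (x u) (x (Suc u))) = cd n (x 0) w" for t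
  proof (induction t)
    case 0 then show ?case by simp
  next
    case (Suc t)
    have "cd n (x (Suc t)) w = cd n (x t) w - cd n (x t) (x (Suc t))"
      using cd_step[of "x t" n "x (Suc t)" w] xl w le Suc.prems by simp
    then show ?case using Suc le by simp
  qed
  from inv[of N] cl have "(\<Sum>u<N. cd n (x u) (x (Suc u))) = 0" by simp
  then have "\<forall>u<N. cd n (x u) (x (Suc u)) = 0" by simp
  then have "\<forall>u<N. x u = x (Suc u)"
  proof (intro allI impI)
    fix u assume u: "u < N" and z: "\<forall>u<N. cd n (x u) (x (Suc u)) = 0"
    have "x u < n" "x (Suc u) < n" using xl u by auto
    then show "x u = x (Suc u)" using cd_0 z u by blast
  qed
  then show False using nc by blast
qed

lemma cg_next: assumes cg: "cyclic_graph n E" and e: "E a b" shows "E a (sucm n a)"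
proof (cases "b = sucm n a")
  case True then show ?thesis using e by simp
next
  case False
  have ab: "a < n" "b < n" "a \<noteq> b" using cg_edge[OF cg e] by auto
  have s: "sucm n a < n" using ab by (auto simp: sucm_def)
  have "0 < cd n a (sucm n a)" "cd n a (sucm n a) < cd n a b"
    using ab False by (auto simp: cd_def sucm_def)
  then show ?thesis using arc[OF cg e s] by blast
qed

definition walk :: "nat \<Rightarrow> (nat \<Rightarrow> nat \<Rightarrow> bool) \<Rightarrow> nat \<Rightarrow> (nat \<Rightarrow> nat) \<Rightarrow> bool" where
  "walk m E N x \<longleftrightarrow> 0 < N \<and> (\<forall>t\<le>N. x t < m) \<and> x N = x 0 \<and>
     (\<forall>t<N. x t = x (Suc t) \<or> E (x t) (x (Suc t))) \<and> (\<exists>t<N. x t \<noteq> x (Suc t))"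

lemma walk_full: assumes cg: "cyclic_graph m E" and wk: "walk m E N x" and w: "w < m"
  shows "E w (sucm m w)"
proof -
  from wk have xl: "\<forall>t\<le>N. x t < m" and cl: "x N = x 0" and st: "\<forall>t<N. x t = x (Suc t) \<or> E (x t) (x (Suc t))"
    and nc: "\<exists>t<N. x t \<noteq> x (Suc t)" unfolding walk_def by auto
  obtain t where t: "t < N" "cd m (x t) w < cd m (x t) (x (Suc t))"
    using walk_cover[OF xl cl nc w] by blast
  have xt: "x t < m" "x (Suc t) < m" using xl t by auto
  have ne: "x t \<noteq> x (Suc t)" using t(2) by (auto simp: cd_def)
  then have e: "E (x t) (x (Suc t))" using st t by auto
  show ?thesis
  proof (cases "cd m (x t) w = 0")
    case True
    then have "w = x t" using cd_0 xt w by auto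
    then show ?thesis using cg_next[OF cg e] by simp
  next
    case False
    then have "E w (x (Suc t))" using arc[OF cg e w] t by auto
    then show ?thesis using cg_next[OF cg] by blast
  qed
qed

lemma walk_dcycle: assumes cg: "cyclic_graph m E" and wk: "walk m E N x"
  shows "has_dcycle m E"
proof -
  have "x 0 < m" using wk unfolding walk_def by auto
  then have m: "0 < m" by simp
  have "\<forall>i<m. id i < m \<and> E (id i) (id ((i + 1) mod m))"
    using walk_full[OF cg wk] sucm_mod by simp
  then show ?thesis unfolding has_dcycle_def using m by blast
qed



lemma walk_noncollapse:
  assumes cg: "cyclic_graph m F" and dH: "directed_graph p H"
    and ge: "\<forall>v w. F v w \<longrightarrow> g v = g w \<or> H (g v) (g w)"
    and gnc: "\<exists>a<m. \<exists>b<m. g a \<noteq> g b" and wk: "walk m F N x"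
  shows "\<exists>t\<le>N. g (x t) \<noteq> g (x 0)"
proof (rule ccontr)
  assume nt: "\<not> ?thesis"
  have c: "g (x t) = g (x 0)" if "t \<le> N" for t using nt that by blast
  obtain w where w: "w < m" "g w \<noteq> g (x 0)"
  proof -
    obtain a b where "a < m" "b < m" "g a \<noteq> g b" using gnc by blast
    then show ?thesis using that by (cases "g a = g (x 0)") auto
  qed
  have xl: "\<forall>t\<le>N. x t < m" and cl: "x N = x 0" and st: "\<forall>t<N. x t = x (Suc t) \<or> F (x t) (x (Suc t))"
    and nc: "\<exists>t<N. x t \<noteq> x (Suc t)" using wk unfolding walk_def by blast+
  obtain t where t: "t < N" "cd m (x t) w < cd m (x t) (x (Suc t))"
    using walk_cover[OF xl cl nc w(1)] by blast
  have xt: "x t < m" "x (Suc t) < m" using xl t by auto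
  have ne: "x t \<noteq> x (Suc t)"
  proof
    assume eq: "x t = x (Suc t)"
    have "cd m (x t) (x (Suc t)) = 0" unfolding eq cd_def by simp
    then show False using t(2) by simp
  qed
  then have e: "F (x t) (x (Suc t))" using st t by blast
  have gt: "g (x t) = g (x 0)" "g (x (Suc t)) = g (x 0)"
    using c[of t] c[of "Suc t"] t by linarith+
  show False
  proof (cases "cd m (x t) w = 0")
    case True
    then have "w = x t" using cd_0 xt w by blast
    then show False using gt w by simp
  next
    case False
    then have "F (x t) w \<and> F w (x (Suc t))" using arc[OF cg e w(1)] t by simp
    then have "g (x t) = g w \<or> H (g (x t)) (g w)" "g w = g (x (Suc t)) \<or> H (g w) (g (x (Suc t)))"
      using ge by blast+
    then have "H (g (x 0)) (g w)" "H (g w) (g (x 0))" using gt w by auto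
    then show False using dH unfolding directed_graph_def by blast
  qed
qed



definition alt :: "nat \<Rightarrow> nat set \<Rightarrow> bool" where
  "alt n A \<longleftrightarrow> (\<exists>a b c d. a<b \<and> b<c \<and> c<d \<and> d<n \<and>
     ((a\<in>A \<and> c\<in>A \<and> b\<notin>A \<and> d\<notin>A) \<or> (a\<notin>A \<and> c\<notin>A \<and> b\<in>A \<and> d\<in>A)))"

lemma sub_nalt: assumes sub: "subinterval n A" shows "\<not> alt n A"
proof
  assume "alt n A"
  then obtain a b c d where o: "a<b" "b<c" "c<d" "d<n" and
    h: "(a\<in>A \<and> c\<in>A \<and> b\<notin>A \<and> d\<notin>A) \<or> (a\<notin>A \<and> c\<notin>A \<and> b\<in>A \<and> d\<in>A)"
    unfolding alt_def by blast
  from sub consider "A = {}" | i j where "i\<le>j" "j<n" "A = {i..j}"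
    | i j where "i<j" "j<n" "A = {j..<n} \<union> {0..i}" unfolding subinterval_def by blast
  then show False
  proof cases
    case 1 then show ?thesis using h by simp
  next
    case (2 i j) then show ?thesis using h o by auto
  next
    case (3 i j) then show ?thesis using h o by auto
  qed
qed

lemma nalt_sub: assumes sub: "A \<subseteq> {..<n}" and na: "\<not> alt n A" shows "subinterval n A"
proof (cases "\<forall>x y z. x < y \<longrightarrow> y < z \<longrightarrow> x \<in> A \<longrightarrow> z \<in> A \<longrightarrow> y \<in> A")
  case True
  show ?thesis
  proof (cases "A = {}")
    case True then show ?thesis by (simp add: subinterval_def)
  next
    case False
    have fin: "finite A" using sub finite_subset by blast
    have "A = {Min A..Max A}"
    proof
      show "A \<subseteq> {Min A..Max A}" using fin by auto
      show "{Min A..Max A} \<subseteq> A"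
      proof
        fix y assume y: "y \<in> {Min A..Max A}"
        have "Min A \<in> A" "Max A \<in> A" using fin False by auto
        then show "y \<in> A" using True y
          by (metis atLeastAtMost_iff le_neq_implies_less)
      qed
    qed
    moreover have "Min A \<le> Max A" "Max A < n" using fin False sub by auto
    ultimately show ?thesis unfolding subinterval_def by blast
  qed
next
  case False
  then obtain x y z where xyz: "x < y" "y < z" "x \<in> A" "z \<in> A" "y \<notin> A" by blast
  have zn: "z < n" using xyz sub by auto
  define B where "B = {..<n} - A"
  have Bc: "u < v \<Longrightarrow> v < w \<Longrightarrow> u \<in> B \<Longrightarrow> w \<in> B \<Longrightarrow> v \<in> B" for u v w
  proof (rule ccontr)
    assume h: "u < v" "v < w" "u \<in> B" "w \<in> B" "v \<notin> B"
    have vA: "v \<in> A" "w < n" "u \<notin> A" "w \<notin> A" using h B_def by auto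
    show False
    proof (cases "y < v")
      case True
      then show False using na xyz vA h unfolding alt_def by blast
    next
      case False
      then have "v < y" using vA xyz by (metis linorder_neqE_nat)
      then show False using na xyz vA h zn unfolding alt_def by blast
    qed
  qed
  have yB: "y \<in> B" using xyz zn B_def by auto
  have finB: "finite B" using B_def by auto
  have Bne: "B \<noteq> {}" using yB by auto
  have Beq: "B = {Min B..Max B}"
  proof
    show "B \<subseteq> {Min B..Max B}" using finB by auto
    show "{Min B..Max B} \<subseteq> B"
    proof
      fix v assume v: "v \<in> {Min B..Max B}"
      have "Min B \<in> B" "Max B \<in> B" using finB Bne by auto
      then show "v \<in> B" using Bc v by (metis atLeastAtMost_iff le_neq_implies_less)
    qed
  qed
  have mM: "Min B \<le> Max B" using finB Bne by simp
  obtain p q where pq: "B = {p..q}" "p \<le> q" using Beq mM by blast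
  have xp: "x < p"
  proof (rule ccontr)
    assume "\<not> x < p"
    moreover have "x \<le> q" using xyz yB pq by auto
    ultimately have "x \<in> B" using pq by auto
    then show False using xyz B_def by auto
  qed
  have zq: "q < z"
  proof (rule ccontr)
    assume "\<not> q < z"
    moreover have "p \<le> z" using xyz yB pq by auto
    ultimately have "z \<in> B" using pq by auto
    then show False using xyz B_def by auto
  qed
  have "A = {q + 1..<n} \<union> {0..p - 1}"
  proof
    show "A \<subseteq> {q + 1..<n} \<union> {0..p - 1}"
    proof
      fix v assume v: "v \<in> A"
      then have "v \<notin> {p..q}" using pq(1) B_def by blast
      then show "v \<in> {q + 1..<n} \<union> {0..p - 1}" using v sub by auto
    qed
    show "{q + 1..<n} \<union> {0..p - 1} \<subseteq> A"
    proof
      fix v assume v: "v \<in> {q + 1..<n} \<union> {0..p - 1}"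
      then have "v \<notin> {p..q}" "v < n" using xp zq zn pq by auto
      then show "v \<in> A" using pq(1) B_def by blast
    qed
  qed
  moreover have "p - 1 < q + 1" "q + 1 < n" using xp zq zn pq by auto
  ultimately show ?thesis unfolding subinterval_def by blast
qed

lemma cb_flip: "u \<noteq> v \<Longrightarrow> v \<noteq> w \<Longrightarrow> u \<noteq> w \<Longrightarrow> \<not> cbetw u v w \<Longrightarrow> cbetw u w v"
  unfolding cbetw_def by auto

lemma alt4: fixes y1 y2 z1 z2 :: nat assumes
  "cbetw y1 z1 y2" "cbetw y1 z1 z2" "cbetw y1 y2 z2" "cbetw z1 y2 z2"
  shows "(y1 < z1 \<and> z1 < y2 \<and> y2 < z2) \<or> (z1 < y2 \<and> y2 < z2 \<and> z2 < y1) \<or>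
         (y2 < z2 \<and> z2 < y1 \<and> y1 < z1) \<or> (z2 < y1 \<and> y1 < z1 \<and> z1 < y2)"
  using assms unfolding cbetw_def by (elim disjE conjE; simp)

lemma four2: fixes a b c d y1 y2 z1 z2 :: nat
  assumes "a<b" "b<c" "c<d"
  "\<not> (y1 < z1 \<and> z1 < y2 \<and> y2 < z2)" "\<not> (y1 < z2 \<and> z2 < y2 \<and> y2 < z1)"
  "\<not> (y2 < z1 \<and> z1 < y1 \<and> y1 < z2)" "\<not> (y2 < z2 \<and> z2 < y1 \<and> y1 < z1)"
  "\<not> (z1 < y1 \<and> y1 < z2 \<and> z2 < y2)" "\<not> (z1 < y2 \<and> y2 < z2 \<and> z2 < y1)"
  "\<not> (z2 < y1 \<and> y1 < z1 \<and> z1 < y2)" "\<not> (z2 < y2 \<and> y2 < z1 \<and> z1 < y1)"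
  "cbetw y1 z1 y2 \<Longrightarrow> cbetw a b c" "cbetw y1 y2 z1 \<Longrightarrow> cbetw a c b"
  "cbetw y1 z1 z2 \<Longrightarrow> cbetw a b d" "cbetw y1 z2 z1 \<Longrightarrow> cbetw a d b"
  "cbetw y1 y2 z2 \<Longrightarrow> cbetw a c d" "cbetw y1 z2 y2 \<Longrightarrow> cbetw a d c"
  "cbetw z1 y2 z2 \<Longrightarrow> cbetw b c d" "cbetw z1 z2 y2 \<Longrightarrow> cbetw b d c"
  "y1 \<noteq> z1" "y1\<noteq>z2" "y2\<noteq>z1" "y2\<noteq>z2" "y1\<noteq>y2" "z1\<noteq>z2"
  shows False
proof -
  have "\<not> cbetw a c b" "\<not> cbetw a d b" "\<not> cbetw a d c" "\<not> cbetw b d c"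
    using assms(1-3) unfolding cbetw_def by linarith+
  then have "\<not> cbetw y1 y2 z1" "\<not> cbetw y1 z2 z1" "\<not> cbetw y1 z2 y2" "\<not> cbetw z1 z2 y2"
    using assms(13,15,17,19) by blast+
  then have "cbetw y1 z1 y2" "cbetw y1 z1 z2" "cbetw y1 y2 z2" "cbetw z1 y2 z2"
    using cb_flip assms(20-25) by metis+
  then show False using alt4 assms(4-11) by blast
qed

lemma fiber_nalt: assumes cm: "cyclic_monotone n m f" and y: "y < m"
  shows "\<not> alt n {x. x < n \<and> f x = y}"
  using cm y sub_nalt unfolding cyclic_monotone_def by blast

lemma pre_core:
  assumes cm: "cyclic_monotone n m f" and fl: "\<forall>x<n. f x < m" and na: "\<not> alt m J"
    and abcd: "a<b" "b<c" "c<d" "d<n" and mem: "f a \<in> J" "f c \<in> J" "f b \<notin> J" "f d \<notin> J"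
  shows False
proof -
  have lt: "f a < m" "f b < m" "f c < m" "f d < m" using fl abcd by auto
  show False
  proof (cases "f a = f c")
    case True
    then have "alt n {x. x < n \<and> f x = f a}" unfolding alt_def using abcd mem
      by (smt (verit) mem_Collect_eq order.strict_trans)
    then show False using fiber_nalt[OF cm lt(1)] by blast
  next
    case ac: False
    show False
    proof (cases "f b = f d")
      case True
      then have "alt n {x. x < n \<and> f x = f b}" unfolding alt_def using abcd mem
        by (smt (verit) mem_Collect_eq order.strict_trans)
      then show False using fiber_nalt[OF cm lt(2)] by blast
    next
      case bd: False
      have rf: "cbetw s s' s''" if "(u,s)\<in>{(f a,a),(f b,b),(f c,c),(f d,d)}"
        "(v,s')\<in>{(f a,a),(f b,b),(f c,c),(f d,d)}" "(w,s'')\<in>{(f a,a),(f b,b),(f c,c),(f d,d)}"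
        "cbetw u v w" for u v w s s' s''
      proof -
        have "s < n" "s' < n" "s'' < n" "u = f s" "v = f s'" "w = f s''" using that abcd by auto
        then show ?thesis using cm that(4) unfolding cyclic_monotone_def by blast
      qed
      have nn: "\<not>((p\<in>{f a,f c} \<and> r \<in>{f a,f c} \<and> q\<in>{f b,f d} \<and> s\<in>{f b,f d}) \<or> (p\<in>{f b,f d} \<and> r\<in>{f b,f d} \<and> q\<in>{f a,f c} \<and> s\<in>{f a,f c}))"
        if "p<q" "q<r" "r<s" for p q r s
      proof
        assume h: "(p\<in>{f a,f c} \<and> r \<in>{f a,f c} \<and> q\<in>{f b,f d} \<and> s\<in>{f b,f d}) \<or> (p\<in>{f b,f d} \<and> r\<in>{f b,f d} \<and> q\<in>{f a,f c} \<and> s\<in>{f a,f c})"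
        have "s < m" using h lt by auto
        then have "alt m J" unfolding alt_def using that h mem by blast
        then show False using na by simp
      qed
      have n: "\<not> (f a < f b \<and> f b < f c \<and> f c < f d)" "\<not> (f a < f d \<and> f d < f c \<and> f c < f b)"
        "\<not> (f c < f b \<and> f b < f a \<and> f a < f d)" "\<not> (f c < f d \<and> f d < f a \<and> f a < f b)"
        "\<not> (f b < f a \<and> f a < f d \<and> f d < f c)" "\<not> (f b < f c \<and> f c < f d \<and> f d < f a)"
        "\<not> (f d < f a \<and> f a < f b \<and> f b < f c)" "\<not> (f d < f c \<and> f c < f b \<and> f b < f a)"
        using nn by blast+
      have r: "cbetw (f a) (f b) (f c) \<Longrightarrow> cbetw a b c" "cbetw (f a) (f c) (f b) \<Longrightarrow> cbetw a c b"
        "cbetw (f a) (f b) (f d) \<Longrightarrow> cbetw a b d" "cbetw (f a) (f d) (f b) \<Longrightarrow> cbetw a d b"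
        "cbetw (f a) (f c) (f d) \<Longrightarrow> cbetw a c d" "cbetw (f a) (f d) (f c) \<Longrightarrow> cbetw a d c"
        "cbetw (f b) (f c) (f d) \<Longrightarrow> cbetw b c d" "cbetw (f b) (f d) (f c) \<Longrightarrow> cbetw b d c"
        by (rule rf; simp)+
      have d: "f a \<noteq> f b" "f a \<noteq> f d" "f c \<noteq> f b" "f c \<noteq> f d" using mem by auto
      show False by (rule four2[OF abcd(1-3) n r d ac bd])
    qed
  qed
qed

lemma alt_compl: assumes "A \<subseteq> {..<n}" "alt n A" shows "alt n ({..<n} - A)"
proof -
  from assms(2) obtain a b c d where o: "a<b" "b<c" "c<d" "d<n" and
    h: "(a\<in>A \<and> c\<in>A \<and> b\<notin>A \<and> d\<notin>A) \<or> (a\<notin>A \<and> c\<notin>A \<and> b\<in>A \<and> d\<in>A)"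
    unfolding alt_def by blast
  have lt: "a < n" "b < n" "c < n" using o by auto
  show ?thesis unfolding alt_def
    by (rule exI[of _ a], rule exI[of _ b], rule exI[of _ c], rule exI[of _ d]) (use o h lt in auto)
qed

lemma preimage_sub:
  assumes cm: "cyclic_monotone n m f" and fl: "\<forall>x<n. f x < m" and J: "subinterval m J"
  shows "subinterval n {x. x < n \<and> f x \<in> J}"
proof (rule nalt_sub)
  show "{x. x < n \<and> f x \<in> J} \<subseteq> {..<n}" by auto
  have naJ: "\<not> alt m J" using sub_nalt[OF J] .
  have Jsub: "J \<subseteq> {..<m}" using J unfolding subinterval_def by auto
  have naJ': "\<not> alt m ({..<m} - J)" 
  proof
    assume "alt m ({..<m} - J)"
    then have "alt m ({..<m} - ({..<m} - J))" by (rule alt_compl[rotated]) auto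
    moreover have "{..<m} - ({..<m} - J) = J" using Jsub by auto
    ultimately show False using naJ by simp
  qed
  show "\<not> alt n {x. x < n \<and> f x \<in> J}"
  proof
    assume "alt n {x. x < n \<and> f x \<in> J}"
    then obtain a b c d where abcd: "a<b" "b<c" "c<d" "d<n" and
      h0: "(a \<in> {x. x < n \<and> f x \<in> J} \<and> c \<in> {x. x < n \<and> f x \<in> J} \<and> b \<notin> {x. x < n \<and> f x \<in> J} \<and> d \<notin> {x. x < n \<and> f x \<in> J}) \<or>
          (a \<notin> {x. x < n \<and> f x \<in> J} \<and> c \<notin> {x. x < n \<and> f x \<in> J} \<and> b \<in> {x. x < n \<and> f x \<in> J} \<and> d \<in> {x. x < n \<and> f x \<in> J})"
      unfolding alt_def by blast
    have lt: "a < n" "b < n" "c < n" using abcd by auto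
    have h: "(f a \<in> J \<and> f c \<in> J \<and> f b \<notin> J \<and> f d \<notin> J) \<or> (f a \<notin> J \<and> f c \<notin> J \<and> f b \<in> J \<and> f d \<in> J)"
      using h0 lt abcd(4) by simp
    then show False
    proof
      assume "f a \<in> J \<and> f c \<in> J \<and> f b \<notin> J \<and> f d \<notin> J"
      then show False using pre_core[OF cm fl naJ abcd] by blast
    next
      assume h2: "f a \<notin> J \<and> f c \<notin> J \<and> f b \<in> J \<and> f d \<in> J"
      have "f a < m" "f b < m" "f c < m" "f d < m" using fl abcd by auto
      then have "f a \<in> {..<m} - J \<and> f c \<in> {..<m} - J \<and> f b \<notin> {..<m} - J \<and> f d \<notin> {..<m} - J"
        using h2 by auto
      then show False using pre_core[OF cm fl naJ' abcd] by blast
    qed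
  qed
qed



lemma cd_shift: assumes "j < n" shows "cd n (t mod n) ((t + j) mod n) = j"
proof -
  have n: "0 < n" using assms by simp
  have e: "(t + j) mod n = (t mod n + j) mod n" by (simp add: mod_add_left_eq)
  have tn: "t mod n < n" using n by simp
  show ?thesis
  proof (cases "t mod n + j < n")
    case True
    then show ?thesis unfolding e cd_def by simp
  next
    case False
    then have "(t mod n + j) mod n = (t mod n + j - n) mod n"
      using le_mod_geq by (metis not_less)
    also have "\<dots> = t mod n + j - n" using tn assms by (intro mod_less) linarith
    finally have e2: "(t mod n + j) mod n = t mod n + j - n" .
    have "cd n (t mod n) (t mod n + j - n) = j" unfolding cd_def using False tn assms by auto
    then show ?thesis unfolding e e2 .
  qed
qed

lemma cnk_iff: "Cnk n k i j \<longleftrightarrow> i < n \<and> j < n \<and> 0 < cd n i j \<and> cd n i j \<le> k"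
  unfolding Cnk_def using cd_mod by auto

lemma cnk_dcycle: assumes "0 < k" "2 * k < n" shows "has_dcycle n (Cnk n k)"
proof -
  have "\<forall>i<n. id i < n \<and> Cnk n k (id i) (id ((i + 1) mod n))"
  proof (intro allI impI)
    fix i assume i: "i < n"
    have "cd n (i mod n) ((i + 1) mod n) = 1" using assms by (intro cd_shift) simp
    then show "id i < n \<and> Cnk n k (id i) (id ((i + 1) mod n))"
      using i assms by (simp add: cnk_iff)
  qed
  then show ?thesis unfolding has_dcycle_def using assms by (intro exI[of _ n] exI[of _ id]) simp
qed

lemma cnk_edge_shift: assumes "0 < j" "j \<le> k" "2 * k < n"
  shows "Cnk n k (t mod n) ((t + j) mod n)"
proof -
  have "cd n (t mod n) ((t + j) mod n) = j" using assms by (intro cd_shift) simp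
  then show ?thesis using assms by (simp add: cnk_iff)
qed

lemma hom_nonconst_step:
  assumes nc: "\<exists>a<n. \<exists>b<n. f a \<noteq> f b"
  shows "\<exists>t<n. f (t mod n) \<noteq> f (Suc t mod n)"
proof (rule ccontr)
  assume "\<not> ?thesis"
  then have st: "\<forall>t<n. f (t mod n) = f (Suc t mod n)" by blast
  have ind: "t < n \<Longrightarrow> f (t mod n) = f 0" for t
  proof (induction t)
    case 0 then show ?case by simp
  next
    case (Suc t)
    have tn: "t < n" using Suc.prems by simp
    have e1: "f (t mod n) = f (Suc t mod n)" using st tn by blast
    have e2: "f (t mod n) = f 0" using Suc.IH tn by blast
    show ?case using e1 e2 by (rule subst)
  qed
  have "\<forall>t<n. f t = f 0"
  proof (intro allI impI)
    fix t assume "t < n"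
    then show "f t = f 0" using ind[of t] by simp
  qed
  then show False using nc by metis
qed

lemma hom_walk: assumes hom: "cyclic_hom n (Cnk n k) m F f" and k: "0 < k" "2 * k < n"
  shows "walk m F n (\<lambda>t. f (t mod n))"
proof -
  have n: "0 < n" using k by simp
  have fl: "\<forall>x<n. f x < m" and ed: "\<forall>v w. Cnk n k v w \<longrightarrow> f v = f w \<or> F (f v) (f w)"
    and nc0: "has_dcycle n (Cnk n k) \<longrightarrow> (\<exists>a<n. \<exists>b<n. f a \<noteq> f b)"
    using hom unfolding cyclic_hom_def by blast+
  have nc: "\<exists>a<n. \<exists>b<n. f a \<noteq> f b" using nc0 cnk_dcycle[OF k] by blast
  have "\<forall>t<n. f (t mod n) = f (Suc t mod n) \<or> F (f (t mod n)) (f (Suc t mod n))"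
  proof (intro allI impI)
    fix t assume "t < n"
    have "Cnk n k (t mod n) ((t + 1) mod n)" using k by (intro cnk_edge_shift) auto
    then show "f (t mod n) = f (Suc t mod n) \<or> F (f (t mod n)) (f (Suc t mod n))" using ed by simp
  qed
  moreover have "\<forall>t\<le>n. f (t mod n) < m" using fl n by simp
  ultimately show ?thesis unfolding walk_def using n hom_nonconst_step[OF nc] by simp
qed



lemma periodic_sum_shift:
  fixes g :: "nat \<Rightarrow> real"
  assumes per: "\<And>t. g (t + n) = g t"
  shows "(\<Sum>t<n. g (t + u)) = (\<Sum>t<n. g t)"
proof (induction u)
  case 0 then show ?case by simp
next
  case (Suc u)
  have "(\<Sum>t<Suc n. g (t + u)) = g (0 + u) + (\<Sum>t<n. g (Suc t + u))"
    by (rule sum.lessThan_Suc_shift)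
  moreover have "(\<Sum>t<Suc n. g (t + u)) = (\<Sum>t<n. g (t + u)) + g (n + u)" by simp
  moreover have "g (n + u) = g u" using per[of u] by (simp add: add.commute)
  ultimately have "(\<Sum>t<n. g (Suc t + u)) = (\<Sum>t<n. g (t + u))" by simp
  then show ?case using Suc by simp
qed

lemma frac_pos_of_ne: fixes u v :: real
  assumes "0 \<le> u" "u < 1" "0 \<le> v" "v < 1" "u \<noteq> v"
  shows "0 < frac (v - u)"
proof -
  have "v - u \<notin> \<int>"
  proof
    assume "v - u \<in> \<int>"
    then obtain z where z: "v - u = of_int z" by (auto elim: Ints_cases)
    have "(of_int (-1) :: real) < of_int z" "of_int z < (of_int 1::real)" using assms z by auto
    then have "-1 < z" "z < 1" by (simp only: of_int_less_iff)+
    then have z0: "z = 0" by linarith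
    have "v - u = 0" using z unfolding z0 by simp
    then show False using assms(5) by simp
  qed
  then have "frac (v - u) \<noteq> 0" by (simp add: frac_eq_0_iff)
  then show ?thesis using frac_ge_0 by (metis less_eq_real_def)
qed

lemma wind_bound:
  fixes p :: "nat \<Rightarrow> real" and F :: "nat \<Rightarrow> nat \<Rightarrow> bool" and \<rho> :: real
  assumes pr: "\<forall>i<m. 0 \<le> p i \<and> p i < 1" and pinj: "inj_on p {..<m}"
    and Fe: "\<forall>a b. F a b \<longrightarrow> a < m \<and> b < m \<and> cw_dist (p a) (p b) \<le> \<rho>"
    and r0: "0 \<le> \<rho>" and r1: "\<rho> < 1/2"
    and hom: "cyclic_hom n (Cnk n k) m F f" and nk: "2 * k < n"
  shows "real k \<le> real n * \<rho>"
proof (cases "k = 0")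
  case True then show ?thesis using r0 by simp
next
  case False
  then have k: "0 < k" by simp
  have n: "0 < n" using nk by simp
  define x where "x t = f (t mod n)" for t
  define a where "a t = p (x t)" for t
  define d where "d t = frac (a (Suc t) - a t)" for t
  have fl: "\<forall>v<n. f v < m" and ed: "\<forall>v w. Cnk n k v w \<longrightarrow> f v = f w \<or> F (f v) (f w)"
    using hom unfolding cyclic_hom_def by blast+
  have xm: "x t < m" for t unfolding x_def using fl n by simp
  have ar: "0 \<le> a t" "a t < 1" for t unfolding a_def using pr xm by auto
  have xper: "x (t + n) = x t" for t unfolding x_def by simp
  have dper: "d (t + n) = d t" for t unfolding d_def a_def using xper[of t] xper[of "Suc t"] by simp
  have close: "frac (a (t + j) - a t) \<le> \<rho>" if "0 < j" "j \<le> k" for t j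
  proof -
    have "Cnk n k (t mod n) ((t + j) mod n)" using that nk by (intro cnk_edge_shift)
    then have "x t = x (t + j) \<or> F (x t) (x (t + j))" using ed unfolding x_def by blast
    then show ?thesis
    proof
      assume "x t = x (t + j)"
      then show ?thesis unfolding a_def using r0 by simp
    next
      assume "F (x t) (x (t + j))"
      then show ?thesis using Fe unfolding a_def cw_dist_def by blast
    qed
  qed
  have d0: "0 \<le> d t" for t unfolding d_def by simp
  have d1: "d t \<le> \<rho>" for t unfolding d_def using close[of 1 t] k by simp
  have integ: "(\<Sum>u<j. d (t + u)) - (a (t + j) - a t) \<in> \<int>" for t j
  proof (induction j)
    case 0 then show ?case by simp
  next
    case (Suc j)
    have "(\<Sum>u<Suc j. d (t + u)) - (a (t + Suc j) - a t) =
          ((\<Sum>u<j. d (t + u)) - (a (t + j) - a t)) + (d (t + j) - (a (Suc (t + j)) - a (t + j)))"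
      by simp
    moreover have "d (t + j) - (a (Suc (t + j)) - a (t + j)) \<in> \<int>"
      unfolding d_def frac_def by simp
    ultimately show ?case using Suc Ints_add by metis
  qed
  have small: "(\<Sum>u<j. d (t + u)) \<le> \<rho>" if "j \<le> k" for t j
    using that
  proof (induction j)
    case 0 then show ?case using r0 by simp
  next
    case (Suc j)
    let ?S = "\<Sum>u<Suc j. d (t + u)"
    have S: "?S = (\<Sum>u<j. d (t + u)) + d (t + j)" by simp
    have "?S \<le> \<rho> + \<rho>" using S Suc d1[of "t + j"] by simp
    then have lt1: "?S < 1" using r1 by simp
    have ge0: "0 \<le> ?S" using d0 by (simp add: sum_nonneg)
    have "frac (a (t + Suc j) - a t) = ?S"
      unfolding frac_unique_iff
    proof (intro conjI)
      have "?S - (a (t + Suc j) - a t) \<in> \<int>" by (rule integ)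
      then have "-(?S - (a (t + Suc j) - a t)) \<in> \<int>" by (rule Ints_minus)
      then show "a (t + Suc j) - a t - ?S \<in> \<int>" by simp
    qed (use lt1 ge0 in auto)
    moreover have "frac (a (t + Suc j) - a t) \<le> \<rho>" using close[of "Suc j" t] Suc.prems by simp
    ultimately show ?case by simp
  qed
  define D where "D = (\<Sum>t<n. d t)"
  have "(\<Sum>t<n. (\<Sum>u<k. d (t + u))) = (\<Sum>u<k. (\<Sum>t<n. d (t + u)))" by (rule sum.swap)
  also have "\<dots> = (\<Sum>u<k. D)" unfolding D_def using periodic_sum_shift[of d n] dper by simp
  also have "\<dots> = real k * D" by simp
  finally have sumeq: "(\<Sum>t<n. (\<Sum>u<k. d (t + u))) = real k * D" .
  have "(\<Sum>t<n. (\<Sum>u<k. d (t + u))) \<le> (\<Sum>t<n. \<rho>)" by (rule sum_mono) (use small in simp)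
  then have kD: "real k * D \<le> real n * \<rho>" using sumeq by simp
  have Dint: "D \<in> \<int>"
  proof -
    have "D - (a (0 + n) - a 0) \<in> \<int>" unfolding D_def using integ[of 0 n] by simp
    moreover have "a (0 + n) = a 0" unfolding a_def using xper[of 0] by simp
    ultimately show ?thesis by simp
  qed
  have wk: "walk m F n x" unfolding x_def using hom_walk[OF hom k nk] .
  then obtain t where t: "t < n" "x t \<noteq> x (Suc t)" unfolding walk_def by blast
  have "a t \<noteq> a (Suc t)" unfolding a_def using t(2) pinj xm by (meson inj_on_def lessThan_iff)
  then have "0 < d t" unfolding d_def using ar by (intro frac_pos_of_ne) auto
  moreover have "d t \<le> D" unfolding D_def using t(1) d0 by (intro member_le_sum) auto
  ultimately have Dpos: "0 < D" by simp
  from Dint obtain z where z: "D = of_int z" by (auto elim: Ints_cases)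
  then have "1 \<le> D" using Dpos by simp
  then have "real k \<le> real k * D" using mult_left_mono[of 1 D "real k"] by simp
  then show ?thesis using kD by simp
qed



abbreviation wfset :: "nat \<Rightarrow> (nat \<Rightarrow> nat \<Rightarrow> bool) \<Rightarrow> real set" where
  "wfset m F \<equiv> {real k / real n | n k. 2 * k < n \<and> (\<exists>f. cyclic_hom n (Cnk n k) m F f)} \<union> {0}"

lemma wf_eq: "wf m F = Sup (wfset m F)" unfolding wf_def by simp

lemma wfset_bdd: "bdd_above (wfset m F)"
proof (rule bdd_aboveI[of _ "1/2"])
  fix x assume "x \<in> wfset m F"
  then show "x \<le> 1/2"
  proof
    assume "x \<in> {real k / real n | n k. 2 * k < n \<and> (\<exists>f. cyclic_hom n (Cnk n k) m F f)}"
    then obtain n k where x: "x = real k / real n" "2 * k < n" by blast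
    then have "real (2 * k) \<le> real n" by linarith
    then have "2 * real k \<le> real n" by simp
    moreover have "0 < real n" using x by simp
    ultimately show "x \<le> 1/2" unfolding x(1) by (simp add: divide_simps)
  qed simp
qed

lemma wf_ge0: "0 \<le> wf m F"
  unfolding wf_eq by (rule cSup_upper[OF _ wfset_bdd]) simp

lemma wf_lb: assumes "2 * k < n" "cyclic_hom n (Cnk n k) m F f"
  shows "real k / real n \<le> wf m F"
  unfolding wf_eq by (rule cSup_upper[OF _ wfset_bdd]) (use assms in blast)

lemma wf_ub: assumes r0: "0 \<le> \<rho>"
  and h: "\<And>n k f. 2 * k < n \<Longrightarrow> cyclic_hom n (Cnk n k) m F f \<Longrightarrow> real k \<le> real n * \<rho>"
  shows "wf m F \<le> \<rho>"
  unfolding wf_eq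
proof (rule cSup_least)
  show "wfset m F \<noteq> {}" by simp
  fix x assume "x \<in> wfset m F"
  then show "x \<le> \<rho>"
  proof
    assume "x \<in> {real k / real n | n k. 2 * k < n \<and> (\<exists>f. cyclic_hom n (Cnk n k) m F f)}"
    then obtain n k f where x: "x = real k / real n" "2 * k < n" "cyclic_hom n (Cnk n k) m F f" by blast
    have "real k \<le> real n * \<rho>" using h x by blast
    moreover have "0 < real n" using x by simp
    ultimately show "x \<le> \<rho>" unfolding x(1) by (simp add: divide_simps mult.commute)
  qed (use r0 in simp)
qed

lemma wf_mono:
  assumes h: "\<And>n k f. 2 * k < n \<Longrightarrow> cyclic_hom n (Cnk n k) m F f \<Longrightarrow> \<exists>g. cyclic_hom n (Cnk n k) m' F' g"
  shows "wf m F \<le> wf m' F'"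
  unfolding wf_eq
proof (rule cSup_subset_mono)
  show "wfset m F \<noteq> {}" by simp
  show "bdd_above (wfset m' F')" by (rule wfset_bdd)
  show "wfset m F \<subseteq> wfset m' F'" using h by blast
qed

lemma wf_pos_witness: assumes "0 < wf m F"
  shows "\<exists>n k f. 0 < k \<and> 2 * k < n \<and> cyclic_hom n (Cnk n k) m F f"
proof (rule ccontr)
  assume "\<not> ?thesis"
  then have "\<And>n k f. 2 * k < n \<Longrightarrow> cyclic_hom n (Cnk n k) m F f \<Longrightarrow> real k \<le> real n * 0"
    by fastforce
  then have "wf m F \<le> 0" by (intro wf_ub) auto
  then show False using assms by simp
qed

lemma id_hom: assumes e: "\<forall>v w. Cnk n k v w \<longrightarrow> E v w" and n: "2 \<le> n"
  shows "cyclic_hom n (Cnk n k) n E id"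
proof -
  have "subinterval n {x. x < n \<and> id x = y}" if "y < n" for y
  proof -
    have "{x. x < n \<and> id x = y} = {y..y}" using that by auto
    then show ?thesis unfolding subinterval_def using that by blast
  qed
  then have "cyclic_monotone n n id" unfolding cyclic_monotone_def by simp
  moreover have "\<exists>a<n. \<exists>b<n. id a \<noteq> id b"
  proof -
    have "(0::nat) < n \<and> (1::nat) < n \<and> id (0::nat) \<noteq> id 1" using n by simp
    then show ?thesis by blast
  qed
  ultimately show ?thesis unfolding cyclic_hom_def using e by auto
qed

lemma sorted_pts:
  fixes X :: "real set"
  assumes fin: "finite X" and X01: "X \<subseteq> {0..<1}"
  shows "\<forall>i<card X. 0 \<le> sorted_list_of_set X ! i \<and> sorted_list_of_set X ! i < 1"
    and "inj_on (\<lambda>i. sorted_list_of_set X ! i) {..<card X}"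
proof -
  have len: "length (sorted_list_of_set X) = card X" by simp
  show "\<forall>i<card X. 0 \<le> sorted_list_of_set X ! i \<and> sorted_list_of_set X ! i < 1"
  proof (intro allI impI)
    fix i assume "i < card X"
    then have "sorted_list_of_set X ! i \<in> set (sorted_list_of_set X)" using len by (metis nth_mem)
    then have "sorted_list_of_set X ! i \<in> X" using fin by simp
    then show "0 \<le> sorted_list_of_set X ! i \<and> sorted_list_of_set X ! i < 1" using X01 by auto
  qed
  show "inj_on (\<lambda>i. sorted_list_of_set X ! i) {..<card X}"
    using inj_on_nth[of "sorted_list_of_set X" "{..<card X}"] len by simp
qed

lemma part_c:
  fixes X :: "real set" and r :: real
  assumes fin: "finite X" and X01: "X \<subseteq> {0..<1}" and r: "0 < r" "r < 1/2"
  shows "wf_le X r \<le> r \<and> wf_lt X r < r \<and> wf_lt X r \<le> wf_le X r"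
proof -
  define p where "p i = sorted_list_of_set X ! i" for i
  define m where "m = card X"
  have pr: "\<forall>i<m. 0 \<le> p i \<and> p i < 1" and pinj: "inj_on p {..<m}"
    using sorted_pts[OF fin X01] unfolding p_def m_def by auto
  have le: "wf_le X r \<le> r" unfolding wf_le_def
  proof (rule wf_ub)
    show "0 \<le> r" using r by simp
    fix n k f assume "2 * k < n" "cyclic_hom n (Cnk n k) (card X) (VR_le X r) f"
    then show "real k \<le> real n * r"
      using wind_bound[OF pr pinj _ _ r(2), of "VR_le X r"] r unfolding m_def p_def VR_le_def
      by auto
  qed
  define C where "C = (\<lambda>(a, b). cw_dist (p a) (p b)) ` ({..<m} \<times> {..<m})"
  define T where "T = {c \<in> C. c < r} \<union> {0}"
  have finT: "finite T" unfolding T_def C_def by simp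
  define \<rho> where "\<rho> = Max T"
  have "\<rho> \<in> T" unfolding \<rho>_def using finT by (intro Max_in) (auto simp: T_def)
  then have rr: "\<rho> < r" unfolding T_def using r by auto
  have r0: "0 \<le> \<rho>" unfolding \<rho>_def using finT by (intro Max_ge) (auto simp: T_def)
  have Fe: "\<forall>a b. VR_lt X r a b \<longrightarrow> a < m \<and> b < m \<and> cw_dist (p a) (p b) \<le> \<rho>"
  proof (intro allI impI)
    fix a b assume v: "VR_lt X r a b"
    then have ab: "a < m" "b < m" "cw_dist (p a) (p b) < r" unfolding VR_lt_def m_def p_def by auto
    then have "cw_dist (p a) (p b) \<in> T" unfolding T_def C_def by force
    then have "cw_dist (p a) (p b) \<le> \<rho>" unfolding \<rho>_def using finT by (intro Max_ge) auto
    then show "a < m \<and> b < m \<and> cw_dist (p a) (p b) \<le> \<rho>" using ab by simp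
  qed
  have lt: "wf_lt X r \<le> \<rho>" unfolding wf_lt_def
  proof (rule wf_ub[OF r0])
    fix n k f assume "2 * k < n" "cyclic_hom n (Cnk n k) (card X) (VR_lt X r) f"
    then show "real k \<le> real n * \<rho>"
      using wind_bound[OF pr pinj Fe r0, of n k f] rr r unfolding m_def by auto
  qed
  have mono: "wf_lt X r \<le> wf_le X r" unfolding wf_lt_def wf_le_def
  proof (rule wf_mono)
    fix n k f assume "2 * k < n" "cyclic_hom n (Cnk n k) (card X) (VR_lt X r) f"
    moreover have "\<forall>v w. VR_lt X r v w \<longrightarrow> VR_le X r v w" unfolding VR_lt_def VR_le_def by auto
    ultimately show "\<exists>g. cyclic_hom n (Cnk n k) (card X) (VR_le X r) g"
      unfolding cyclic_hom_def by meson
  qed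
  show ?thesis using le lt rr mono by simp
qed

lemma cnk_cw: assumes "a < n" "b < n"
  shows "cw_dist (real a / real n) (real b / real n) = real (cd n a b) / real n"
proof -
  have n: "0 < real n" using assms by simp
  have c: "cd n a b < n" using cd_lt assms by blast
  show ?thesis unfolding cw_dist_def frac_unique_iff
  proof (intro conjI)
    show "real b / real n - real a / real n - real (cd n a b) / real n \<in> \<int>"
    proof (cases "a \<le> b")
      case True
      then have "real (cd n a b) = real b - real a" unfolding cd_def by simp
      then have "real b / real n - real a / real n - real (cd n a b) / real n = 0"
        by (simp add: diff_divide_distrib)
      then show ?thesis by simp
    next
      case False
      then have "real (cd n a b) = real b + real n - real a" unfolding cd_def using assms by (simp add: of_nat_diff)
      then have e: "real b - real a - real (cd n a b) = - real n" by simp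
      have "real b / real n - real a / real n - real (cd n a b) / real n
          = (real b - real a - real (cd n a b)) / real n" by (simp add: diff_divide_distrib)
      also have "\<dots> = -1" unfolding e using n by simp
      finally have "real b / real n - real a / real n - real (cd n a b) / real n = -1" .
      then show ?thesis by simp
    qed
    show "0 \<le> real (cd n a b) / real n" by simp
    show "real (cd n a b) / real n < 1" using c n by simp
  qed
qed

lemma part_d: assumes nk: "2 * k < n" shows "wf n (Cnk n k) = real k / real n"
proof -
  define p where "p i = real i / real n" for i
  have n: "0 < n" using nk by simp
  have pr: "\<forall>i<n. 0 \<le> p i \<and> p i < 1" unfolding p_def using n by simp
  have pinj: "inj_on p {..<n}" unfolding p_def inj_on_def using n by simp
  have Fe: "\<forall>a b. Cnk n k a b \<longrightarrow> a < n \<and> b < n \<and> cw_dist (p a) (p b) \<le> real k / real n"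
  proof (intro allI impI)
    fix a b assume e: "Cnk n k a b"
    then have ab: "a < n" "b < n" "cd n a b \<le> k" unfolding cnk_iff by auto
    then show "a < n \<and> b < n \<and> cw_dist (p a) (p b) \<le> real k / real n"
      unfolding p_def using cnk_cw[OF ab(1,2)] n by (simp add: divide_right_mono)
  qed
  have r0: "0 \<le> real k / real n" by simp
  have r1: "real k / real n < 1/2" using nk n by (simp add: divide_simps)
  have ub: "wf n (Cnk n k) \<le> real k / real n"
  proof (rule wf_ub[OF r0])
    fix n' k' f assume "2 * k' < n'" "cyclic_hom n' (Cnk n' k') n (Cnk n k) f"
    then show "real k' \<le> real n' * (real k / real n)"
      using wind_bound[OF pr pinj Fe r0 r1] by blast
  qed
  show ?thesis
  proof (cases "k = 0")
    case True then show ?thesis using ub wf_ge0[of n "Cnk n k"] by simp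
  next
    case False
    then have "2 \<le> n" using nk by simp
    then have "cyclic_hom n (Cnk n k) n (Cnk n k) id" by (intro id_hom) auto
    then have "real k / real n \<le> wf n (Cnk n k)" using wf_lb nk by blast
    then show ?thesis using ub by simp
  qed
qed



lemma dcycle_walk: assumes cg: "cyclic_graph n E" and dc: "has_dcycle n E"
  shows "\<exists>s x. walk n E s x"
proof -
  obtain s :: nat and v :: "nat \<Rightarrow> nat" where sv: "0 < s" "\<forall>i<s. v i < n \<and> E (v i) (v ((i + 1) mod s))"
    using dc unfolding has_dcycle_def by meson
  define x where "x t = v (t mod s)" for t
  have "walk n E s x" unfolding walk_def
  proof (intro conjI)
    show "0 < s" by (rule sv(1))
    show "\<forall>t\<le>s. x t < n" unfolding x_def using sv by simp
    show "x s = x 0" unfolding x_def by simp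
    show "\<forall>t<s. x t = x (Suc t) \<or> E (x t) (x (Suc t))"
    proof (intro allI impI)
      fix t assume t: "t < s"
      then have "E (v t) (v ((t + 1) mod s))" using sv by blast
      then show "x t = x (Suc t) \<or> E (x t) (x (Suc t))" unfolding x_def using t by simp
    qed
    have "E (v 0) (v ((0 + 1) mod s))" using sv by blast
    then have e: "E (x 0) (x (Suc 0))" unfolding x_def by simp
    then have "x 0 \<noteq> x (Suc 0)" using cg_edge[OF cg e] by blast
    then show "\<exists>t<s. x t \<noteq> x (Suc t)" using sv(1) by blast
  qed
  then show ?thesis by blast
qed

lemma part_a: assumes cg: "cyclic_graph n E" shows "0 < wf n E \<longleftrightarrow> has_dcycle n E"
proof
  assume "0 < wf n E"
  then obtain n' k f where h: "0 < k" "2 * k < n'" "cyclic_hom n' (Cnk n' k) n E f"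
    using wf_pos_witness by blast
  have "walk n E n' (\<lambda>t. f (t mod n'))" using hom_walk[OF h(3) h(1,2)] .
  then show "has_dcycle n E" using walk_dcycle[OF cg] by blast
next
  assume dc: "has_dcycle n E"
  obtain s x where wk: "walk n E s x" using dcycle_walk[OF cg dc] by blast
  have full: "\<forall>w<n. E w (sucm n w)" using walk_full[OF cg wk] by blast
  have n0: "0 < n" using wk unfolding walk_def by auto
  have n3: "3 \<le> n"
  proof (rule ccontr)
    assume "\<not> 3 \<le> n"
    then have "n = 1 \<or> n = 2" using n0 by auto
    then show False
    proof
      assume "n = 1"
      then have "E 0 0" using full by (simp add: sucm_def)
      then show False using cg_edge[OF cg] by blast
    next
      assume "n = 2"
      then have "E 0 1" "E 1 0" using full[rule_format, of 0] full[rule_format, of 1]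
        by (simp_all add: sucm_def)
      then show False using cg_edge[OF cg] by blast
    qed
  qed
  have e: "\<forall>v w. Cnk n 1 v w \<longrightarrow> E v w"
  proof (intro allI impI)
    fix v w assume "Cnk n 1 v w"
    then have vw: "v < n" "w < n" "cd n v w = 1" unfolding cnk_iff by auto
    then have "w = sucm n v" unfolding cd_def sucm_def by (auto split: if_splits)
    then show "E v w" using full vw by simp
  qed
  have "cyclic_hom n (Cnk n 1) n E id" using e n3 by (intro id_hom) auto
  then have "real 1 / real n \<le> wf n E" using n3 by (intro wf_lb) auto
  moreover have "0 < real 1 / real n" using n0 by simp
  ultimately show "0 < wf n E" by linarith
qed

lemma cnk0_nodcycle: "has_dcycle n (Cnk n 0) \<Longrightarrow> False"
  unfolding has_dcycle_def cnk_iff by auto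

lemma hom_comp:
  assumes cgE: "cyclic_graph n E" and cgF: "cyclic_graph m F"
    and hf: "cyclic_hom N (Cnk N K) n E f" and hg: "cyclic_hom n E m F g" and NK: "2 * K < N"
  shows "cyclic_hom N (Cnk N K) m F (g \<circ> f)"
proof -
  have fl: "\<forall>x<N. f x < n" and fm: "cyclic_monotone N n f"
    and fe: "\<forall>v w. Cnk N K v w \<longrightarrow> f v = f w \<or> E (f v) (f w)"
    and fnc: "has_dcycle N (Cnk N K) \<longrightarrow> (\<exists>a<N. \<exists>b<N. f a \<noteq> f b)"
    using hf unfolding cyclic_hom_def by blast+
  have gl: "\<forall>x<n. g x < m" and gm: "cyclic_monotone n m g"
    and ge: "\<forall>v w. E v w \<longrightarrow> g v = g w \<or> F (g v) (g w)"
    and gnc: "has_dcycle n E \<longrightarrow> (\<exists>a<n. \<exists>b<n. g a \<noteq> g b)"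
    using hg unfolding cyclic_hom_def by blast+
  have l: "\<forall>x<N. (g \<circ> f) x < m" using fl gl by simp
  have mono: "cyclic_monotone N m (g \<circ> f)" unfolding cyclic_monotone_def
  proof (intro conjI allI impI)
    fix y assume y: "y < m"
    have J: "subinterval n {z. z < n \<and> g z = y}" using gm y unfolding cyclic_monotone_def by blast
    have "subinterval N {x. x < N \<and> f x \<in> {z. z < n \<and> g z = y}}"
      by (rule preimage_sub[OF fm fl J])
    moreover have "{x. x < N \<and> f x \<in> {z. z < n \<and> g z = y}} = {x. x < N \<and> (g \<circ> f) x = y}"
      using fl by auto
    ultimately show "subinterval N {x. x < N \<and> (g \<circ> f) x = y}" by simp
  next
    fix s s' s'' assume s: "s < N" "s' < N" "s'' < N" and c: "cbetw ((g \<circ> f) s) ((g \<circ> f) s') ((g \<circ> f) s'')"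
    have "cbetw (f s) (f s') (f s'')" using gm fl s c unfolding cyclic_monotone_def by simp
    then show "cbetw s s' s''" using fm s unfolding cyclic_monotone_def by blast
  qed
  have edges: "\<forall>v w. Cnk N K v w \<longrightarrow> (g \<circ> f) v = (g \<circ> f) w \<or> F ((g \<circ> f) v) ((g \<circ> f) w)"
  proof (intro allI impI)
    fix v w assume c: "Cnk N K v w"
    then have "f v = f w \<or> E (f v) (f w)" using fe by blast
    then show "(g \<circ> f) v = (g \<circ> f) w \<or> F ((g \<circ> f) v) ((g \<circ> f) w)"
    proof
      assume "E (f v) (f w)"
      then show ?thesis using ge by simp
    qed simp
  qed
  have nc: "has_dcycle N (Cnk N K) \<longrightarrow> (\<exists>a<N. \<exists>b<N. (g \<circ> f) a \<noteq> (g \<circ> f) b)"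
  proof
    assume dc: "has_dcycle N (Cnk N K)"
    then have K: "0 < K" using cnk0_nodcycle by (cases K) auto
    have wk: "walk n E N (\<lambda>t. f (t mod N))" using hom_walk[OF hf K NK] .
    have "has_dcycle n E" using walk_dcycle[OF cgE wk] .
    then have gn: "\<exists>a<n. \<exists>b<n. g a \<noteq> g b" using gnc by blast
    have dF: "directed_graph m F" using cgF unfolding cyclic_graph_def by blast
    obtain t where t: "t \<le> N" "g (f (t mod N)) \<noteq> g (f (0 mod N))"
      using walk_noncollapse[OF cgE dF ge gn wk] by blast
    have N: "0 < N" using NK by simp
    then have "t mod N < N \<and> (0::nat) < N \<and> (g \<circ> f) (t mod N) \<noteq> (g \<circ> f) 0" using t(2) by simp
    then show "\<exists>a<N. \<exists>b<N. (g \<circ> f) a \<noteq> (g \<circ> f) b" by blast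
  qed
  show ?thesis unfolding cyclic_hom_def using l mono edges nc by blast
qed

lemma part_b:
  assumes cgE: "cyclic_graph n E" and cgF: "cyclic_graph m F" and hg: "cyclic_hom n E m F g"
  shows "wf n E \<le> wf m F"
proof (rule wf_mono)
  fix N K f assume "2 * K < N" "cyclic_hom N (Cnk N K) n E f"
  then show "\<exists>h. cyclic_hom N (Cnk N K) m F h" using hom_comp[OF cgE cgF _ hg] by blast
qed

theorem proposition3p8:
  shows "(\<forall>n E. cyclic_graph n E \<longrightarrow> (wf n E > 0 \<longleftrightarrow> has_dcycle n E))
    \<and> (\<forall>n E m F f. cyclic_graph n E \<and> cyclic_graph m F \<and> cyclic_hom n E m F f
          \<longrightarrow> wf n E \<le> wf m F)
    \<and> (\<forall>(X::real set) (r::real). finite X \<and> X \<subseteq> {0..<1} \<and> 0 < r \<and> r < 1/2 \<longrightarrow>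
          wf_le X r \<le> r \<and> wf_lt X r < r \<and> wf_lt X r \<le> wf_le X r)
    \<and> (\<forall>n k::nat. 2 * k < n \<longrightarrow> wf n (Cnk n k) = real k / real n)"
  using part_a part_b part_c part_d by blast

end
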